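(* (i) Let $N\ge1$ be an integer, let $\nu$ have the distribution of $\frac1N\sum_{m=1}^N|\xi_m|$ where $\xi_1,\dots,\xi_N$ are independent standard normal variables, and let $\omega\sim\mathcal N(0,1)$. Then $\mathbb P(\nu\ge t)\le 2^N\,\mathbb P(\omega\ge\sqrt N t)$ for all $t>0$; moreover, if $t\ge2\sqrt{\ln2}$, then $\mathbb P(\nu\ge t)\le\exp(-Nt^2/4)$. (ii) Let $0\le k<j$ be integers and let $\nu=(\nu_0,\dots,\nu_{2^j-1})$ be a vector of independent random variables each distributed as $\frac1N\sum_{m=1}^N|\xi_m|$ (as in (i)), and let $\nu^*=(\nu^*_1,\dots,\nu^*_{2^j})$ be its non-increasing rearrangement. Then $$\mathbb P(\nu^*_{2^k}\ge t)\le\big[e\cdot2^{j-k}\exp(-Nt^2/4)\big]^{2^k},\qquad t\ge2\sqrt{\ln 2}.$$ *)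

theory Defs
  imports "HOL-Probability.Probability"
begin

definition std_gauss :: "real measure" where
  "std_gauss = density lborel (\<lambda>x. ennreal (std_normal_density x))"

definition nu_dist :: "nat \<Rightarrow> real measure" where
  "nu_dist N = distr (PiM {..<N} (\<lambda>_. std_gauss)) borel
                     (\<lambda>x. (\<Sum>m<N. \<bar>x m\<bar>) / real N)"

text \<open>Non-increasing rearrangement of the vector (v 0, ..., v (n-1)), 1-indexed:
  decr_rearr v n 1 is the largest entry, decr_rearr v n n the smallest.\<close>
definition decr_rearr :: "(nat \<Rightarrow> real) \<Rightarrow> nat \<Rightarrow> nat \<Rightarrow> real" where
  "decr_rearr v n i = rev (sort (map v [0..<n])) ! (i - 1)"

end

theory Submission
  imports Defs
begin


lemma prob_std_gauss: "prob_space std_gauss"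
  unfolding std_gauss_def by (rule prob_space_normal_density) simp

lemma sets_std_gauss[measurable_cong, simp]: "sets std_gauss = sets borel"
  unfolding std_gauss_def by simp

lemma prob_P: "prob_space (PiM I (\<lambda>_. std_gauss))"
  by (intro prob_space_PiM prob_std_gauss)

lemma indep_coords:
  assumes "I \<noteq> {}"
  shows "prob_space.indep_vars (PiM I (\<lambda>_. std_gauss)) (\<lambda>_. std_gauss) (\<lambda>m x. x m) I"
proof -
  interpret P: prob_space "PiM I (\<lambda>_. std_gauss)" by (rule prob_P)
  show ?thesis
  proof (subst P.indep_vars_iff_distr_eq_PiM'[OF assms])
    show "\<And>i. i \<in> I \<Longrightarrow> (\<lambda>x. x i) \<in> measurable (PiM I (\<lambda>_. std_gauss)) std_gauss"
      by (auto intro: measurable_component_singleton)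
    have 1: "(\<Pi>\<^sub>M i\<in>I. distr (PiM I (\<lambda>_. std_gauss)) std_gauss (\<lambda>x. x i)) = PiM I (\<lambda>_. std_gauss)"
      by (intro PiM_cong refl distr_PiM_component prob_std_gauss) auto
    have 2: "distr (PiM I (\<lambda>_. std_gauss)) (PiM I (\<lambda>_. std_gauss)) (\<lambda>x. \<lambda>i\<in>I. x i)
        = distr (PiM I (\<lambda>_. std_gauss)) (PiM I (\<lambda>_. std_gauss)) (\<lambda>x. x)"
      by (intro distr_cong refl) (auto simp: space_PiM PiE_def extensional_restrict)
    show "distr (PiM I (\<lambda>_. std_gauss)) (PiM I (\<lambda>_. std_gauss)) (\<lambda>x. \<lambda>i\<in>I. x i) =
      (\<Pi>\<^sub>M i\<in>I. distr (PiM I (\<lambda>_. std_gauss)) std_gauss (\<lambda>x. x i))"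
      unfolding 1 2 by simp
  qed
qed

lemma gauss_tail:
  assumes "s \<ge> 0"
  shows "measure std_gauss {s..} \<le> exp (- s\<^sup>2 / 2)"
proof -
  have "emeasure std_gauss {s..} = (\<integral>\<^sup>+x. ennreal (std_normal_density x) * indicator {s..} x \<partial>lborel)"
    unfolding std_gauss_def by (simp add: emeasure_density)
  also have "\<dots> \<le> (\<integral>\<^sup>+x. ennreal (exp (- s\<^sup>2 / 2)) * ennreal (normal_density s 1 x) \<partial>lborel)"
  proof (intro nn_integral_mono)
    fix x :: real
    show "ennreal (std_normal_density x) * indicator {s..} x \<le> ennreal (exp (- s\<^sup>2 / 2)) * ennreal (normal_density s 1 x)"
    proof (cases "x \<ge> s")
      case True
      have "- x\<^sup>2 / 2 \<le> - s\<^sup>2 / 2 + (- (x - s)\<^sup>2 / 2)"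
        using True assms by (simp add: power2_eq_square algebra_simps mult_left_mono)
      then have "exp (- x\<^sup>2 / 2) \<le> exp (- s\<^sup>2 / 2) * exp (- (x - s)\<^sup>2 / 2)"
        by (simp add: exp_add[symmetric])
      then have "std_normal_density x \<le> exp (- s\<^sup>2 / 2) * normal_density s 1 x"
        unfolding std_normal_density_def normal_density_def by (simp add: divide_simps)
      then show ?thesis using True by (simp add: ennreal_mult'[symmetric] ennreal_leI)
    qed simp
  qed
  also have "\<dots> = ennreal (exp (- s\<^sup>2 / 2)) * (\<integral>\<^sup>+x. ennreal (normal_density s 1 x) \<partial>lborel)"
    by (simp add: nn_integral_cmult)
  also have "(\<integral>\<^sup>+x. ennreal (normal_density s 1 x) \<partial>lborel) = 1"
    by (subst nn_integral_eq_integral) auto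
  finally have "emeasure std_gauss {s..} \<le> ennreal (exp (- s\<^sup>2 / 2))" by simp
  then show ?thesis unfolding measure_def by (simp add: enn2real_leI)
qed

lemma signed_sum_prob:
  fixes N :: nat and S :: "nat set" and c :: real
  assumes N: "N \<ge> 1"
  shows "measure (PiM {..<N} (\<lambda>_. std_gauss))
      {x \<in> space (PiM {..<N} (\<lambda>_. std_gauss)). (\<Sum>m<N. (if m \<in> S then 1 else -1) * x m) \<ge> real N * c}
     = measure std_gauss {sqrt (real N) * c..}"
proof -
  define P where "P = PiM {..<N} (\<lambda>_. std_gauss)"
  interpret P: prob_space P unfolding P_def by (rule prob_P)
  define e where "e m = (if m \<in> S then 1 else -1 :: real)" for m
  have I: "{..<N} \<noteq> {}" using N by (auto simp: lessThan_empty_iff)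
  have ind: "P.indep_vars (\<lambda>_. borel) (\<lambda>m x. e m * x m) {..<N}"
    unfolding P_def
    by (rule prob_space.indep_vars_compose2[OF prob_P indep_coords[OF I]]) simp
  have dl: "distr P lborel (\<lambda>x. x m) = distr P std_gauss (\<lambda>x. x m)" for m
    unfolding distr_def std_gauss_def by simp
  have d1: "distributed P lborel (\<lambda>x. x m) std_normal_density" if "m < N" for m
  proof -
    have mN: "m \<in> {..<N}" using that by simp
    show ?thesis
    unfolding distributed_def
  proof (intro conjI)
    show "distr P lborel (\<lambda>x. x m) = density lborel (\<lambda>x. ennreal (std_normal_density x))"
      using dl[of m] distr_PiM_component[of "{..<N}" "\<lambda>_. std_gauss" m, OF prob_std_gauss mN]
      by (simp add: P_def std_gauss_def)
    show "(\<lambda>x. x m) \<in> measurable P lborel" unfolding P_def using mN by measurable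
  qed simp
  qed
  have d2: "distributed P lborel (\<lambda>x. e m * x m) (normal_density 0 1)" if "m < N" for m
  proof -
    have "e m \<noteq> 0" by (simp add: e_def)
    moreover have "\<bar>e m\<bar> = 1" by (simp add: e_def)
    ultimately show ?thesis using P.normal_density_affine[OF d1[OF that], of "e m" 0] by simp
  qed
  have d3: "distributed P lborel (\<lambda>x. \<Sum>m<N. e m * x m) (normal_density 0 (sqrt (real N)))"
  proof -
    have "distributed P lborel (\<lambda>x. \<Sum>m\<in>{..<N}. e m * x m) (normal_density (\<Sum>i\<in>{..<N}. 0) (sqrt (\<Sum>i\<in>{..<N}. 1\<^sup>2)))"
      by (rule P.sum_indep_normal[OF _ I ind]) (auto intro: d2)
    then show ?thesis by simp
  qed
  have sN: "sqrt (real N) > 0" using N by simp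
  have d4: "distributed P lborel (\<lambda>x. 0 + (1 / sqrt (real N)) * (\<Sum>m<N. e m * x m)) (normal_density 0 1)"
  proof -
    have "distributed P lborel (\<lambda>x. 0 + (1 / sqrt (real N)) * (\<Sum>m<N. e m * x m))
       (normal_density (0 + (1 / sqrt (real N)) * 0) (\<bar>1 / sqrt (real N)\<bar> * sqrt (real N)))"
      by (rule P.normal_density_affine[OF d3 sN]) (use N in \<open>simp add: Suc_le_eq\<close>)
    moreover have "\<bar>1 / sqrt (real N)\<bar> * sqrt (real N) = 1" using sN N by simp
    ultimately show ?thesis by (simp only: mult_zero_right add_0_left)
  qed
  define W where "W = (\<lambda>x. 0 + (1 / sqrt (real N)) * (\<Sum>m<N. e m * x m))"
  have dd: "distributed P lborel W (normal_density 0 1)" using d4 by (simp only: W_def)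
  have Wm: "W \<in> measurable P lborel" by (rule distributed_measurable[OF dd])
  have dW: "distr P lborel W = std_gauss"
    unfolding std_gauss_def by (rule distributed_distr_eq_density[OF dd])
  define Z where "Z = (\<lambda>x. \<Sum>m<N. e m * x m)"
  have key: "real N * c \<le> Z x \<longleftrightarrow> sqrt (real N) * c \<le> W x" for x
  proof -
    have "W x = Z x / sqrt (real N)" by (simp add: W_def Z_def)
    then have "sqrt (real N) * c \<le> W x \<longleftrightarrow> sqrt (real N) * c * sqrt (real N) \<le> Z x"
      using sN by (simp add: pos_le_divide_eq)
    also have "sqrt (real N) * c * sqrt (real N) = real N * c"
    proof -
      have "sqrt (real N) * c * sqrt (real N) = (sqrt (real N) * sqrt (real N)) * c" by (simp only: ac_simps)
      also have "sqrt (real N) * sqrt (real N) = real N" by simp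
      finally show ?thesis .
    qed
    finally show ?thesis by simp
  qed
  have "{x \<in> space P. real N * c \<le> Z x} = W -` {sqrt (real N) * c..} \<inter> space P"
    using key by auto
  then have "measure P {x \<in> space P. real N * c \<le> Z x} = measure (distr P lborel W) {sqrt (real N) * c..}"
    using measure_distr[OF Wm, of "{sqrt (real N) * c..}"] by simp
  then show ?thesis unfolding dW unfolding P_def Z_def e_def .
qed

lemma part1:
  fixes N :: nat and t :: real
  assumes N: "N \<ge> 1"
  shows "measure (nu_dist N) {t..} \<le> 2 ^ N * measure std_gauss {sqrt (real N) * t..}"
proof -
  define P where "P = PiM {..<N} (\<lambda>_. std_gauss)"
  interpret P: prob_space P unfolding P_def by (rule prob_P)
  define f where "f = (\<lambda>x::nat\<Rightarrow>real. (\<Sum>m<N. \<bar>x m\<bar>) / real N)"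
  define A where "A S = {x \<in> space P. (\<Sum>m<N. (if m \<in> S then 1 else -1) * x m) \<ge> real N * t}" for S :: "nat set"
  define g where "g = measure std_gauss {sqrt (real N) * t..}"
  have fm: "f \<in> measurable P borel" unfolding f_def P_def by measurable
  have Am: "A S \<in> sets P" for S unfolding A_def P_def by measurable
  have Np: "real N > 0" using N by simp
  have sub: "f -` {t..} \<inter> space P \<subseteq> (\<Union>S\<in>Pow {..<N}. A S)"
  proof
    fix x assume x: "x \<in> f -` {t..} \<inter> space P"
    define S where "S = {m. m < N \<and> x m \<ge> 0}"
    have "(\<Sum>m<N. (if m \<in> S then 1 else -1) * x m) = (\<Sum>m<N. \<bar>x m\<bar>)"
      by (intro sum.cong) (auto simp: S_def)
    moreover have "(\<Sum>m<N. \<bar>x m\<bar>) \<ge> real N * t"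
      using x Np by (simp add: f_def pos_le_divide_eq mult.commute)
    ultimately have "x \<in> A S" using x by (simp add: A_def)
    moreover have "S \<in> Pow {..<N}" by (auto simp: S_def)
    ultimately show "x \<in> (\<Union>S\<in>Pow {..<N}. A S)" by blast
  qed
  have "measure (nu_dist N) {t..} = measure P (f -` {t..} \<inter> space P)"
    unfolding nu_dist_def P_def[symmetric] f_def[symmetric] by (rule measure_distr[OF fm]) simp
  also have "\<dots> \<le> measure P (\<Union>S\<in>Pow {..<N}. A S)"
    by (rule P.finite_measure_mono[OF sub]) (auto intro: Am)
  also have "\<dots> \<le> (\<Sum>S\<in>Pow {..<N}. measure P (A S))"
    by (rule P.finite_measure_subadditive_finite) (auto intro: Am)
  also have "\<dots> = (\<Sum>S\<in>Pow {..<N}. g)"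
    by (intro sum.cong refl) (simp add: A_def P_def g_def signed_sum_prob[OF N])
  also have "\<dots> = 2 ^ N * g" by (simp add: card_Pow)
  finally show ?thesis unfolding g_def .
qed

lemma part2:
  fixes N :: nat and t :: real
  assumes N: "N \<ge> 1" and t: "t \<ge> 2 * sqrt (ln 2)"
  shows "measure (nu_dist N) {t..} \<le> exp (- real N * t\<^sup>2 / 4)"
proof -
  have l2: "ln (2::real) > 0" by simp
  have t0: "t \<ge> 0" using t l2 by (smt (verit) real_sqrt_ge_zero)
  have tt: "t\<^sup>2 \<ge> 4 * ln 2"
  proof -
    have "(2 * sqrt (ln 2))\<^sup>2 \<le> t\<^sup>2" using t l2 by (intro power_mono) auto
    then show ?thesis using l2 by (simp add: power_mult_distrib)
  qed
  have "measure (nu_dist N) {t..} \<le> 2 ^ N * measure std_gauss {sqrt (real N) * t..}"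
    by (rule part1[OF N])
  also have "\<dots> \<le> 2 ^ N * exp (- (sqrt (real N) * t)\<^sup>2 / 2)"
    using t0 by (intro mult_left_mono gauss_tail) auto
  also have "(sqrt (real N) * t)\<^sup>2 = real N * t\<^sup>2" by (simp add: power_mult_distrib)
  also have "(2::real) ^ N = exp (real N * ln 2)"
    by (simp add: exp_of_nat_mult)
  also have "exp (real N * ln 2) * exp (- (real N * t\<^sup>2) / 2) = exp (real N * ln 2 - real N * t\<^sup>2 / 2)"
    by (simp add: exp_add[symmetric])
  also have "\<dots> \<le> exp (- real N * t\<^sup>2 / 4)"
  proof -
    have "real N * ln 2 \<le> real N * (t\<^sup>2 / 4)" using tt by (intro mult_left_mono) auto
    then show ?thesis by simp
  qed
  finally show ?thesis .
qed

lemma length_filter_sort: "length (filter P (sort xs)) = length (filter P (xs :: real list))"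
proof -
  have "mset (filter P (sort xs)) = mset (filter P xs)" by simp
  then show ?thesis by (metis size_mset)
qed

lemma rearr_card:
  fixes v :: "nat \<Rightarrow> real"
  assumes r1: "1 \<le> r" and rn: "r \<le> n" and t: "t \<le> decr_rearr v n r"
  shows "r \<le> card {i. i < n \<and> t \<le> v i}"
proof -
  define xs where "xs = map v [0..<n]"
  define L where "L = rev (sort xs)"
  have lenL: "length L = n" by (simp add: L_def xs_def)
  have srt: "sorted (sort xs)" by simp
  have lens: "length (sort xs) = n" by (simp add: xs_def)
  have big: "t \<le> L ! i" if i: "i < r" for i
  proof -
    have "L ! (r - 1) \<le> L ! i"
    proof -
      have "L ! i = sort xs ! (n - Suc i)" using i rn lens by (simp add: L_def rev_nth)
      moreover have "L ! (r - 1) = sort xs ! (n - Suc (r - 1))" using r1 rn lens by (simp add: L_def rev_nth)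
      moreover have "sort xs ! (n - Suc (r - 1)) \<le> sort xs ! (n - Suc i)"
        using i r1 rn lens by (intro sorted_nth_mono[OF srt]) auto
      ultimately show ?thesis by simp
    qed
    moreover have "t \<le> L ! (r - 1)" using t by (simp add: decr_rearr_def L_def xs_def)
    ultimately show ?thesis by simp
  qed
  have "filter (\<lambda>y. t \<le> y) (take r L) = take r L"
    using big by (auto simp: filter_id_conv in_set_conv_nth)
  then have "r \<le> length (filter (\<lambda>y. t \<le> y) (take r L))" using rn lenL by simp
  also have "\<dots> \<le> length (filter (\<lambda>y. t \<le> y) L)"
  proof -
    have "L = take r L @ drop r L" by simp
    then have "filter (\<lambda>y. t \<le> y) L = filter (\<lambda>y. t \<le> y) (take r L) @ filter (\<lambda>y. t \<le> y) (drop r L)"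
      by (metis filter_append)
    then show ?thesis by simp
  qed
  also have "\<dots> = length (filter (\<lambda>y. t \<le> y) xs)"
    by (simp add: L_def rev_filter[symmetric] length_filter_sort)
  also have "\<dots> = card {i. i < n \<and> t \<le> v i}"
    unfolding xs_def length_filter_conv_card by (intro arg_cong[where f=card]) auto
  finally show ?thesis .
qed

lemma pow_over_fact: "(real r) ^ r / fact r \<le> exp (real r)"
proof -
  have "(\<lambda>k. real r ^ k /\<^sub>R fact k) sums exp (real r)" by (rule exp_converges)
  then have sm: "summable (\<lambda>k. real r ^ k /\<^sub>R fact k)" and eq: "exp (real r) = (\<Sum>k. real r ^ k /\<^sub>R fact k)"
    by (auto simp: sums_iff)
  have "sum (\<lambda>k. real r ^ k /\<^sub>R fact k) {r} \<le> (\<Sum>k. real r ^ k /\<^sub>R fact k)"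
    by (rule sum_le_suminf[OF sm]) auto
  then show ?thesis using eq by (simp add: divide_inverse mult.commute)
qed

lemma binom_bound:
  assumes "1 \<le> r"
  shows "real (n choose r) \<le> (exp 1 * real n / real r) ^ r"
proof -
  have rp: "real r > 0" using assms by simp
  have "real (n choose r) * fact r \<le> real n ^ r"
    using binomial_fact_pow[of n r] by (metis of_nat_fact of_nat_le_iff of_nat_mult of_nat_power)
  then have a: "real (n choose r) \<le> real n ^ r / fact r" by (simp add: field_simps)
  have "real r ^ r / fact r \<le> exp 1 ^ r"
    using pow_over_fact[of r] by (simp add: exp_of_nat_mult[symmetric] mult.commute)
  then have "1 / fact r \<le> exp 1 ^ r / real r ^ r" using rp by (simp add: field_simps)
  then have "real n ^ r * (1 / fact r) \<le> real n ^ r * (exp 1 ^ r / real r ^ r)"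
    by (intro mult_left_mono) auto
  then have "real n ^ r / fact r \<le> (exp 1 * real n / real r) ^ r"
    by (simp add: power_divide power_mult_distrib field_simps)
  with a show ?thesis by linarith
qed

lemma part3:
  fixes N :: nat and M :: "'a measure" and X :: "nat \<Rightarrow> 'a \<Rightarrow> real"
  assumes N: "N \<ge> 1" and Mp: "prob_space M"
    and ind: "prob_space.indep_vars M (\<lambda>_. borel) X {..<2 ^ j}"
    and dX: "\<forall>i < 2 ^ j. distr M borel (X i) = nu_dist N"
    and kj: "k < j" and t: "t \<ge> 2 * sqrt (ln 2)"
  shows "measure M {x \<in> space M. decr_rearr (\<lambda>i. X i x) (2 ^ j) (2 ^ k) \<ge> t}
              \<le> (exp 1 * 2 ^ (j - k) * exp (- real N * t\<^sup>2 / 4)) ^ (2 ^ k)"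
proof -
  interpret prob_space M by (rule Mp)
  define n :: nat where "n = 2 ^ j"
  define r :: nat where "r = 2 ^ k"
  define p where "p = exp (- real N * t\<^sup>2 / 4)"
  define B where "B i = X i -` {t..} \<inter> space M" for i
  define F where "F = {S. S \<subseteq> {..<n} \<and> card S = r}"
  have r1: "1 \<le> r" by (simp add: r_def)
  have rn: "r \<le> n" unfolding r_def n_def using kj by (simp add: power_increasing)
  have Xm: "X i \<in> measurable M borel" if "i < n" for i
    using ind that unfolding indep_vars_def n_def by auto
  have Bm: "B i \<in> events" if "i < n" for i
    unfolding B_def using Xm[OF that] by measurable
  have qB: "prob (B i) \<le> p" if "i < n" for i
  proof -
    have "prob (B i) = measure (distr M borel (X i)) {t..}"
      unfolding B_def by (subst measure_distr[OF Xm[OF that]]) auto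
    also have "\<dots> = measure (nu_dist N) {t..}" using dX that by (simp add: n_def)
    also have "\<dots> \<le> p" unfolding p_def by (rule part2[OF N t])
    finally show ?thesis .
  qed
  have p0: "0 \<le> p" by (simp add: p_def)
  have sub: "{x \<in> space M. decr_rearr (\<lambda>i. X i x) n r \<ge> t} \<subseteq> (\<Union>S\<in>F. \<Inter>i\<in>S. B i)"
  proof
    fix x assume x: "x \<in> {x \<in> space M. decr_rearr (\<lambda>i. X i x) n r \<ge> t}"
    then have "r \<le> card {i. i < n \<and> t \<le> X i x}" using rearr_card[OF r1 rn] by auto
    then obtain S where S: "S \<subseteq> {i. i < n \<and> t \<le> X i x}" "card S = r"
      by (meson obtain_subset_with_card_n)
    then have "S \<in> F" by (auto simp: F_def)
    moreover have "x \<in> (\<Inter>i\<in>S. B i)" using S x by (auto simp: B_def)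
    ultimately show "x \<in> (\<Union>S\<in>F. \<Inter>i\<in>S. B i)" by blast
  qed
  have finF: "finite F" unfolding F_def by (rule finite_subset[of _ "Pow {..<n}"]) auto
  have Sfacts: "S \<subseteq> {..<n}" "card S = r" "finite S" "S \<noteq> {}" if "S \<in> F" for S
    using that r1 by (auto simp: F_def intro: finite_subset)
  have interm: "(\<Inter>i\<in>S. B i) \<in> events" if "S \<in> F" for S
    using Sfacts[OF that] Bm by (intro sets.finite_INT) auto
  have "measure M {x \<in> space M. decr_rearr (\<lambda>i. X i x) n r \<ge> t} \<le> prob (\<Union>S\<in>F. \<Inter>i\<in>S. B i)"
    by (rule finite_measure_mono[OF sub]) (use finF interm in auto)
  also have "\<dots> \<le> (\<Sum>S\<in>F. prob (\<Inter>i\<in>S. B i))"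
    by (rule finite_measure_subadditive_finite[OF finF]) (use interm in auto)
  also have "\<dots> \<le> (\<Sum>S\<in>F. p ^ r)"
  proof (rule sum_mono)
    fix S assume SF: "S \<in> F"
    note Sf = Sfacts[OF SF]
    have "prob (\<Inter>i\<in>S. B i) = (\<Prod>i\<in>S. prob (B i))"
      unfolding B_def
      by (rule indep_varsD[OF ind]) (use Sf in \<open>auto simp: n_def\<close>)
    also have "\<dots> \<le> (\<Prod>i\<in>S. p)"
      by (rule prod_mono) (use Sf qB in auto)
    also have "\<dots> = p ^ r" using Sf by simp
    finally show "prob (\<Inter>i\<in>S. B i) \<le> p ^ r" .
  qed
  also have "\<dots> = real (n choose r) * p ^ r"
    by (simp add: F_def n_subsets)
  also have "\<dots> \<le> (exp 1 * real n / real r) ^ r * p ^ r"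
    by (intro mult_right_mono binom_bound r1) (simp add: p0)
  also have "exp 1 * real n / real r = exp 1 * 2 ^ (j - k)"
    unfolding n_def r_def using kj by (simp add: power_diff)
  also have "(exp 1 * 2 ^ (j - k)) ^ r * p ^ r = (exp 1 * 2 ^ (j - k) * p) ^ r"
    by (simp add: power_mult_distrib)
  finally show ?thesis unfolding n_def r_def p_def by (simp add: mult.assoc)
qed

theorem lemma4p5:
  fixes N :: nat
  assumes "N \<ge> 1"
  shows "(\<forall>t::real. t > 0 \<longrightarrow>
            measure (nu_dist N) {t..} \<le> 2 ^ N * measure std_gauss {sqrt (real N) * t..})
       \<and> (\<forall>t::real. t \<ge> 2 * sqrt (ln 2) \<longrightarrow>
            measure (nu_dist N) {t..} \<le> exp (- real N * t\<^sup>2 / 4))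
       \<and> (\<forall>(M :: 'a measure) (X :: nat \<Rightarrow> 'a \<Rightarrow> real) (j::nat) (k::nat) (t::real).
            prob_space M \<longrightarrow>
            prob_space.indep_vars M (\<lambda>_. borel) X {..<2 ^ j} \<longrightarrow>
            (\<forall>i < 2 ^ j. distr M borel (X i) = nu_dist N) \<longrightarrow>
            k < j \<longrightarrow> t \<ge> 2 * sqrt (ln 2) \<longrightarrow>
            measure M {x \<in> space M. decr_rearr (\<lambda>i. X i x) (2 ^ j) (2 ^ k) \<ge> t}
              \<le> (exp 1 * 2 ^ (j - k) * exp (- real N * t\<^sup>2 / 4)) ^ (2 ^ k))"
proof (intro conjI allI impI)
  fix t :: real assume "t > 0"
  show "measure (nu_dist N) {t..} \<le> 2 ^ N * measure std_gauss {sqrt (real N) * t..}"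
    by (rule part1[OF assms])
next
  fix t :: real assume "t \<ge> 2 * sqrt (ln 2)"
  then show "measure (nu_dist N) {t..} \<le> exp (- real N * t\<^sup>2 / 4)"
    by (rule part2[OF assms])
next
  fix M :: "'a measure" and X :: "nat \<Rightarrow> 'a \<Rightarrow> real" and j k :: nat and t :: real
  assume "prob_space M" "prob_space.indep_vars M (\<lambda>_. borel) X {..<2 ^ j}"
    "\<forall>i < 2 ^ j. distr M borel (X i) = nu_dist N" "k < j" "t \<ge> 2 * sqrt (ln 2)"
  then show "measure M {x \<in> space M. decr_rearr (\<lambda>i. X i x) (2 ^ j) (2 ^ k) \<ge> t}
              \<le> (exp 1 * 2 ^ (j - k) * exp (- real N * t\<^sup>2 / 4)) ^ (2 ^ k)"
    by (rule part3[OF assms])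
qed

end
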